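(* Let $r\in\mathbb{C}$, $\lambda\in\mathbb{C}^*$, and let $f\in\mathcal{D}^\omega_{2-r}[\infty]$ be $\lambda$-periodic, i.e. $f(t+1)=\lambda f(t)$. Consider asymptotic expansions of $(Pf)(t)=(i-t)^{2-r}f(t)$ of the form $$(Pf)(t)\sim\sum_{n\ge k}b_nt^{-n}\quad\text{for some }k\in\mathbb{Z},\qquad( * )$$ as real $t\to\pm\infty$ (meaning $(Pf)(t)=\sum_{n=k}^{N-1}b_nt^{-n}+O(t^{-N})$ for every $N\ge k$). (i) If $f$ satisfies $( * )$ both as $t\uparrow\infty$ and as $t\downarrow-\infty$ with the same coefficients $b_n$, then (a) $f$ is a constant function if $\lambda=1$ and $r\in\mathbb{Z}$, and in this case $r\ge k+2$; (b) $f=0$ in all other cases. (ii) Let $\varepsilon\in\{1,-1\}$ and suppose $f$ satisfies $( * )$ as $\varepsilon t\uparrow\infty$. Then (a) if $\lambda=1$ and $r\in\mathbb{Z}_{\ge k+2}$, $f$ is a constant function; (b) otherwise, if $|\lambda|=1$, then $f=0$; (c) otherwise $f(t)\sim0$ (i.e. $f(t)=O(|t|^{-N})$ for all $N$) as $\varepsilon t\uparrow\infty$.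
   Context: $\mathbb{H}^-$ is the lower half-plane. $P\varphi(t)=(i-t)^{2-r}\varphi(t)$ with $\arg(i-t)\in(-\pi/2,3\pi/2)$. $\mathcal{D}^\omega_{2-r}[\infty]$ is the space of holomorphic functions $\varphi$ on $\mathbb{H}^-$ such that $P\varphi$ extends holomorphically to an open subset of $\mathbb{P}^1(\mathbb{C})$ containing $\mathbb{H}^-\cup\mathbb{R}$ (so $f$ is defined and holomorphic on a neighbourhood of $\mathbb{H}^-\cup\mathbb{R}$, in particular on $\mathbb{R}$). *)

theory Defs
  imports "HOL-Complex_Analysis.Complex_Analysis"
begin

definition lower_hp :: "complex set" where
  "lower_hp = {z. Im z < 0}"

text \<open>The operator P. We use the principal branch of powr; for Im t < 1 (in particular on
  the closure of the lower half-plane) Im(i - t) > 0, so arg(i - t) lies in (0, pi) and the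
  principal branch agrees with the paper's branch arg(i - t) in (-pi/2, 3pi/2).\<close>
definition Pop :: "complex \<Rightarrow> (complex \<Rightarrow> complex) \<Rightarrow> complex \<Rightarrow> complex" where
  "Pop r f t = (\<i> - t) powr (2 - r) * f t"

text \<open>The values
  of the (total) function f off the lower half-plane provide the extension.\<close>
definition D_omega_inf :: "complex \<Rightarrow> (complex \<Rightarrow> complex) set" where
  "D_omega_inf r = {f. f holomorphic_on lower_hp \<and>
      (\<exists>U. open U \<and> lower_hp \<union> {z. Im z = 0} \<subseteq> U \<and> Pop r f holomorphic_on U)}"

definition asymp_exp :: "(real \<Rightarrow> complex) \<Rightarrow> int \<Rightarrow> (int \<Rightarrow> complex) \<Rightarrow> real filter \<Rightarrow> bool" where
  "asymp_exp g k b F \<longleftrightarrow> (\<forall>N\<ge>k. \<exists>C. eventually (\<lambda>t.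
      norm (g t - (\<Sum>n\<in>{k..<N}. b n * complex_of_real t powi (- n)))
        \<le> C * \<bar>t\<bar> powr (- real_of_int N)) F)"

definition asymp_zero :: "(real \<Rightarrow> complex) \<Rightarrow> real filter \<Rightarrow> bool" where
  "asymp_zero g F \<longleftrightarrow> (\<forall>N::int. \<exists>C. eventually (\<lambda>t. norm (g t) \<le> C * \<bar>t\<bar> powr (- real_of_int N)) F)"

end

theory Submission
  imports Defs
begin

lemma i_minus_nz: "Im z < 1 \<Longrightarrow> \<i> - z \<noteq> 0"
  by (auto simp: complex_eq_iff)

lemma i_minus_notnonpos: "Im z < 1 \<Longrightarrow> \<i> - z \<notin> \<real>\<^sub>\<le>\<^sub>0"
  by (auto simp: complex_nonpos_Reals_iff)

lemma powr_nz: "Im z < 1 \<Longrightarrow> (\<i> - z) powr w \<noteq> 0"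
  using i_minus_notnonpos by (auto simp: powr_def complex_nonpos_Reals_iff)

lemma D_hol:
  assumes "f \<in> D_omega_inf r"
  obtains W where "open W" "{z. Im z \<le> 0} \<subseteq> W" "f holomorphic_on W"
proof -
  from assms obtain U where U: "open U" "lower_hp \<union> {z. Im z = 0} \<subseteq> U" "Pop r f holomorphic_on U"
    unfolding D_omega_inf_def by blast
  define W where "W = U \<inter> {z. Im z < 1}"
  have oW: "open W" unfolding W_def using U(1) by (intro open_Int open_halfspace_Im_lt)
  have sub: "{z. Im z \<le> 0} \<subseteq> W"
  proof
    fix z assume z: "z \<in> {z. Im z \<le> 0}"
    then have "Im z < 0 \<or> Im z = 0" by auto
    then have "z \<in> U" using U(2) unfolding lower_hp_def by blast
    then show "z \<in> W" unfolding W_def using z by simp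
  qed
  have hP: "Pop r f holomorphic_on W" using U(3) holomorphic_on_subset W_def by blast
  have h1: "(\<lambda>z. Pop r f z / (\<i> - z) powr (2 - r)) holomorphic_on W"
    using hP by (intro holomorphic_intros) (auto simp: W_def i_minus_notnonpos powr_nz)
  have "f holomorphic_on W"
    by (rule holomorphic_transform[OF h1]) (auto simp: Pop_def powr_nz W_def)
  then show ?thesis using that oW sub by blast
qed

lemma zero_islimpt_real: "(0::complex) islimpt {z. Im z = 0}"
  unfolding islimpt_approachable
proof (intro allI impI)
  fix e :: real assume "e > 0"
  then show "\<exists>x'\<in>{z. Im z = 0}. x' \<noteq> 0 \<and> dist x' 0 < e"
    by (intro bexI[of _ "complex_of_real (e/2)"]) (auto simp: dist_norm)
qed

lemma D_props:
  assumes fD: "f \<in> D_omega_inf r" and per: "\<forall>t. Im t < 0 \<longrightarrow> f (t + 1) = lam * f t"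
  shows "continuous_on UNIV (\<lambda>t::real. f (complex_of_real t))"
    and "\<And>x::real. f (complex_of_real x + 1) = lam * f (complex_of_real x)"
    and "\<And>c. (\<forall>x::real. f (complex_of_real x) = c) \<Longrightarrow> (\<forall>z. Im z \<le> 0 \<longrightarrow> f z = c)"
proof -
  obtain W where W: "open W" "{z. Im z \<le> 0} \<subseteq> W" "f holomorphic_on W"
    using D_hol[OF fD] by blast
  have cont: "isCont f z" if "Im z \<le> 0" for z
    using W that holomorphic_on_imp_continuous_on continuous_on_eq_continuous_at by blast
  show "continuous_on UNIV (\<lambda>t::real. f (complex_of_real t))"
    by (intro continuous_at_imp_continuous_on ballI continuous_at_compose[of _ complex_of_real f, unfolded o_def]
        continuous_intros cont) simp
  show "f (complex_of_real x + 1) = lam * f (complex_of_real x)" for x :: real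
  proof -
    define z where "z = (\<lambda>n::nat. complex_of_real x - \<i> * of_real (inverse (real (Suc n))))"
    have zl: "z \<longlonglongrightarrow> complex_of_real x"
    proof -
      have "(\<lambda>n. inverse (real (Suc n))) \<longlonglongrightarrow> 0" by (rule LIMSEQ_inverse_real_of_nat)
      then have "(\<lambda>n. complex_of_real x - \<i> * of_real (inverse (real (Suc n)))) \<longlonglongrightarrow> complex_of_real x - \<i> * of_real 0"
        by (intro tendsto_intros)
      then show ?thesis by (simp add: z_def)
    qed
    have zl1: "(\<lambda>n. z n + 1) \<longlonglongrightarrow> complex_of_real x + 1"
      by (intro tendsto_intros zl)
    have A: "(\<lambda>n. f (z n)) \<longlonglongrightarrow> f (complex_of_real x)"
      by (rule isCont_tendsto_compose[OF cont zl]) simp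
    have B: "(\<lambda>n. f (z n + 1)) \<longlonglongrightarrow> f (complex_of_real x + 1)"
      by (rule isCont_tendsto_compose[OF cont zl1]) simp
    have "Im (z n) < 0" for n unfolding z_def by simp
    then have "f (z n + 1) = lam * f (z n)" for n using per by blast
    then have B': "(\<lambda>n. f (z n + 1)) \<longlonglongrightarrow> lam * f (complex_of_real x)"
      using A by (simp add: tendsto_mult_left)
    show ?thesis using LIMSEQ_unique[OF B B'] .
  qed
  show "\<forall>z. Im z \<le> 0 \<longrightarrow> f z = c" if hc: "\<forall>x::real. f (complex_of_real x) = c" for c
  proof (intro allI impI)
    fix w assume w: "Im w \<le> 0"
    define S where "S = connected_component_set W 0"
    have sub: "{z. Im z \<le> 0} \<subseteq> S" unfolding S_def
      by (rule connected_component_maximal) (use W in \<open>auto intro: convex_connected convex_halfspace_Im_le\<close>)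
    have "(\<lambda>z. f z - c) holomorphic_on S"
      using W(3) unfolding S_def by (intro holomorphic_intros) (meson connected_component_subset holomorphic_on_subset)
    then have "f w - c = 0"
    proof (rule analytic_continuation[where U = "{z. Im z = 0}" and \<xi> = 0])
      show "open S" unfolding S_def using W(1) by (rule open_connected_component)
      show "connected S" unfolding S_def by (rule connected_connected_component)
      show "{z. Im z = 0} \<subseteq> S" "0 \<in> S" "w \<in> S" using sub w by auto
      show "0 islimpt {z. Im z = 0}" by (rule zero_islimpt_real)
      fix z assume "z \<in> {z. Im z = 0}"
      then have "z = complex_of_real (Re z)" by (simp add: complex_eq_iff)
      then show "f z - c = 0" using hc by (metis eq_iff_diff_eq_0)
    qed
    then show "f w = c" by simp
  qed
qed

lemma ev_inf: assumes "F \<le> at_infinity" shows "eventually (\<lambda>t::real. \<bar>t\<bar> \<ge> c) F"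
proof -
  have "eventually (\<lambda>t::real. \<bar>t\<bar> \<ge> c) at_infinity"
    unfolding eventually_at_infinity by auto
  then show ?thesis using assms filter_leD by blast
qed

lemma inv_lim: assumes "F \<le> at_infinity"
  shows "((\<lambda>t. inverse (complex_of_real t)) \<longlongrightarrow> 0) F"
proof -
  have "((\<lambda>t::real. inverse t) \<longlongrightarrow> 0) F"
    using tendsto_mono[OF assms tendsto_inverse_0] by simp
  then have "((\<lambda>t. complex_of_real (inverse t)) \<longlongrightarrow> complex_of_real 0) F"
    by (intro tendsto_intros)
  then show ?thesis by simp
qed

lemma ratio_lim: assumes "F \<le> at_infinity"
  shows "((\<lambda>t. ((\<i> - complex_of_real t) / complex_of_real t) powi p) \<longlongrightarrow> (-1) powi p) F"
proof -
  have "((\<lambda>t. \<i> * inverse (complex_of_real t) - 1) \<longlongrightarrow> \<i> * 0 - 1) F"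
    using inv_lim[OF assms] by (intro tendsto_intros)
  then have "((\<lambda>t. (\<i> * inverse (complex_of_real t) - 1) powi p) \<longlongrightarrow> (\<i> * 0 - 1) powi p) F"
    by (rule tendsto_power_int) auto
  moreover have "eventually (\<lambda>t. (\<i> * inverse (complex_of_real t) - 1) powi p =
        ((\<i> - complex_of_real t) / complex_of_real t) powi p) F"
    using ev_inf[OF assms, of 1]
    by eventually_elim (auto simp: field_simps)
  ultimately show ?thesis by (auto elim: tendsto_cong[THEN iffD1, rotated])
qed

lemma lead:
  assumes F: "F \<le> at_infinity" and ae: "asymp_exp h k b F" and pk: "k \<le> p"
    and z: "\<forall>n. k \<le> n \<and> n < p \<longrightarrow> b n = 0"
  shows "((\<lambda>t. h t * complex_of_real t powi p) \<longlongrightarrow> b p) F"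
proof -
  have kp1: "k \<le> p + 1" using pk by simp
  have AE: "\<forall>N\<ge>k. \<exists>C. eventually (\<lambda>t.
      norm (h t - (\<Sum>n\<in>{k..<N}. b n * complex_of_real t powi (- n)))
        \<le> C * \<bar>t\<bar> powr (- real_of_int N)) F" using ae unfolding asymp_exp_def by simp
  obtain C where C: "eventually (\<lambda>t.
      norm (h t - (\<Sum>n\<in>{k..<p+1}. b n * complex_of_real t powi (- n)))
        \<le> C * \<bar>t\<bar> powr (- real_of_int (p+1))) F"
    using spec[where x="p+1", OF AE] kp1 by blast
  have sumeq: "(\<Sum>n\<in>{k..<p+1}. b n * complex_of_real t powi (- n)) = b p * complex_of_real t powi (- p)" for t
  proof -
    have "{k..<p+1} = insert p {k..<p}" using pk by auto
    then show ?thesis using z by (simp add: sum.neutral)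
  qed
  have "eventually (\<lambda>t. norm (h t * complex_of_real t powi p - b p) \<le> \<bar>C\<bar> * inverse \<bar>t\<bar>) F"
    using C ev_inf[OF F, of 1]
  proof eventually_elim
    case (elim t)
    then have t0: "t \<noteq> 0" by auto
    have "h t * complex_of_real t powi p - b p = (h t - b p * complex_of_real t powi (- p)) * complex_of_real t powi p"
      using t0 by (simp add: algebra_simps power_int_minus)
    then have "norm (h t * complex_of_real t powi p - b p) = norm (h t - b p * complex_of_real t powi (- p)) * \<bar>t\<bar> powi p"
      by (simp add: norm_mult norm_power_int)
    also have "\<dots> \<le> (C * \<bar>t\<bar> powr (- real_of_int (p+1))) * \<bar>t\<bar> powi p"
      using elim(1) by (intro mult_right_mono) (auto simp: sumeq)
    also have "\<bar>t\<bar> powr (- real_of_int (p+1)) = \<bar>t\<bar> powi (-(p+1))"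
    proof -
      have "\<bar>t\<bar> powr (- real_of_int (p+1)) = \<bar>t\<bar> powr real_of_int (-(p+1))" by simp
      also have "\<dots> = \<bar>t\<bar> powi (-(p+1))" using t0 by (intro powr_real_of_int') auto
      finally show ?thesis .
    qed
    also have "C * \<bar>t\<bar> powi (-(p+1)) * \<bar>t\<bar> powi p = C * inverse \<bar>t\<bar>"
    proof -
      have X: "\<bar>t\<bar> powi (-(p+1)) * \<bar>t\<bar> powi p = \<bar>t\<bar> powi (-(p+1) + p)"
        by (rule power_int_add[symmetric]) (use t0 in simp)
      have Y: "-(p+1) + p = -1" by simp
      have "C * \<bar>t\<bar> powi (-(p+1)) * \<bar>t\<bar> powi p = C * (\<bar>t\<bar> powi (-(p+1)) * \<bar>t\<bar> powi p)"
        by (simp only: mult.assoc)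
      also have "\<dots> = C * \<bar>t\<bar> powi (-1)" by (simp only: X Y)
      also have "\<dots> = C * inverse \<bar>t\<bar>" by simp
      finally show ?thesis .
    qed
    also have "\<dots> \<le> \<bar>C\<bar> * inverse \<bar>t\<bar>"
      by (intro mult_right_mono) auto
    finally show ?case .
  qed
  moreover have "((\<lambda>t. \<bar>C\<bar> * inverse \<bar>t\<bar>) \<longlongrightarrow> 0) F"
  proof -
    have "((\<lambda>t::real. inverse t) \<longlongrightarrow> 0) F"
      using tendsto_mono[OF F tendsto_inverse_0] by simp
    then have "((\<lambda>t. \<bar>C\<bar> * \<bar>inverse t\<bar>) \<longlongrightarrow> \<bar>C\<bar> * \<bar>0\<bar>) F"
      by (intro tendsto_intros)
    then show ?thesis by simp
  qed
  ultimately have "((\<lambda>t. h t * complex_of_real t powi p - b p) \<longlongrightarrow> 0) F"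
    by (rule Lim_null_comparison)
  then show ?thesis using Lim_transform by (simp add: LIM_zero_iff)
qed

lemma powr_quot:
  fixes z w \<beta> :: complex
  assumes "Im z > 0" "Im w > 0"
  shows "(z / w) powr \<beta> = z powr \<beta> / w powr \<beta>"
proof -
  have z0: "z \<noteq> 0" and w0: "w \<noteq> 0" using assms by auto
  have wn: "w \<notin> \<real>\<^sub>\<le>\<^sub>0" using assms by (auto simp: complex_nonpos_Reals_iff)
  have iw: "Ln (inverse w) = - Ln w" by (rule Ln_inverse[OF wn])
  have a1: "0 < Im (Ln z) \<and> Im (Ln z) < pi" using Im_Ln_pos_lt_imp assms(1) by blast
  have a2: "0 < Im (Ln w) \<and> Im (Ln w) < pi" using Im_Ln_pos_lt_imp assms(2) by blast
  have "Ln (z * inverse w) = Ln z + Ln (inverse w)"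
    using a1 a2 z0 w0 by (intro Ln_times_simple) (auto simp: iw)
  then have L: "Ln (z / w) = Ln z - Ln w" by (simp add: iw divide_inverse)
  show ?thesis using z0 w0 by (simp add: powr_def L exp_diff right_diff_distrib)
qed

lemma U2:
  fixes a c :: "nat \<Rightarrow> real" and \<mu> :: real
  assumes ac: "(\<lambda>n. a n / c n) \<longlonglongrightarrow> \<mu>" and mu: "\<mu> > 0"
    and ic: "(\<lambda>n. inverse (c n)) \<longlonglongrightarrow> 0" and cnz: "eventually (\<lambda>n. c n \<noteq> 0) sequentially"
  shows "(\<lambda>n. (\<i> - complex_of_real (a n)) powr \<beta> / (\<i> - complex_of_real (c n)) powr \<beta>)
           \<longlonglongrightarrow> complex_of_real \<mu> powr \<beta>"
proof -
  have ac': "(\<lambda>n. complex_of_real (a n / c n)) \<longlonglongrightarrow> complex_of_real \<mu>"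
    using ac by (intro tendsto_intros)
  have ic': "(\<lambda>n. complex_of_real (inverse (c n))) \<longlonglongrightarrow> complex_of_real 0"
    using ic by (intro tendsto_intros)
  have "(\<lambda>n. (\<i> * complex_of_real (inverse (c n)) - complex_of_real (a n / c n)) /
              (\<i> * complex_of_real (inverse (c n)) - 1))
        \<longlonglongrightarrow> (\<i> * complex_of_real 0 - complex_of_real \<mu>) / (\<i> * complex_of_real 0 - 1)"
    using ac' ic' by (intro tendsto_divide tendsto_diff tendsto_mult tendsto_const) auto
  then have q: "(\<lambda>n. (\<i> * complex_of_real (inverse (c n)) - complex_of_real (a n / c n)) /
              (\<i> * complex_of_real (inverse (c n)) - 1)) \<longlonglongrightarrow> complex_of_real \<mu>"
    by simp
  have "(\<lambda>n. ((\<i> * complex_of_real (inverse (c n)) - complex_of_real (a n / c n)) /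
              (\<i> * complex_of_real (inverse (c n)) - 1)) powr \<beta>) \<longlonglongrightarrow> complex_of_real \<mu> powr \<beta>"
    using mu by (intro tendsto_powr_complex[OF _ q]) (auto simp: complex_nonpos_Reals_iff)
  moreover have "eventually (\<lambda>n. ((\<i> * complex_of_real (inverse (c n)) - complex_of_real (a n / c n)) /
              (\<i> * complex_of_real (inverse (c n)) - 1)) powr \<beta> =
        (\<i> - complex_of_real (a n)) powr \<beta> / (\<i> - complex_of_real (c n)) powr \<beta>) sequentially"
    using cnz
  proof eventually_elim
    case (elim n)
    have "(\<i> * complex_of_real (inverse (c n)) - complex_of_real (a n / c n)) /
              (\<i> * complex_of_real (inverse (c n)) - 1) = (\<i> - complex_of_real (a n)) / (\<i> - complex_of_real (c n))"
    proof -
      have "\<i> - complex_of_real (c n) \<noteq> 0" by (auto simp: complex_eq_iff)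
      then show ?thesis using elim by (simp add: field_simps)
    qed
    then show ?case by (simp add: powr_quot)
  qed
  ultimately show ?thesis by (auto elim: tendsto_cong[THEN iffD1, rotated])
qed

lemma beta_zero:
  fixes \<beta> :: complex
  assumes H: "\<forall>m::nat. m \<ge> 1 \<longrightarrow> complex_of_real (real m) powr \<beta> = 1"
  shows "\<beta> = 0"
proof -
  have E: "exp (\<beta> * complex_of_real (ln (real m))) = 1" if "m \<ge> 1" for m :: nat
  proof -
    have "complex_of_real (real m) powr \<beta> = exp (\<beta> * complex_of_real (ln (real m)))"
      using that by (simp add: powr_def Ln_of_real)
    then show ?thesis using H that by simp
  qed
  have "exp (\<beta> * complex_of_real (ln (real 2))) = 1" by (rule E) simp
  then have "Re (\<beta> * complex_of_real (ln (real 2))) = 0" unfolding exp_eq_1 by (rule conjunct1)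
  then have re: "Re \<beta> = 0" by simp
  define M :: nat where "M = nat \<lceil>\<bar>Im \<beta>\<bar>\<rceil> + 1"
  have M1: "M \<ge> 1" and Mb: "\<bar>Im \<beta>\<bar> < real M" unfolding M_def by linarith+
  have "exp (\<beta> * complex_of_real (ln (real M))) = 1" by (rule E[OF M1])
  then obtain n0 :: int where "Im (\<beta> * complex_of_real (ln (real M))) = of_int (2 * n0) * pi"
    unfolding exp_eq_1 by blast
  then have n0: "Im \<beta> * ln (real M) = of_int (2 * n0) * pi" by simp
  have "exp (\<beta> * complex_of_real (ln (real (M+1)))) = 1" by (rule E) simp
  then obtain n1 :: int where "Im (\<beta> * complex_of_real (ln (real (M+1)))) = of_int (2 * n1) * pi"
    unfolding exp_eq_1 by blast
  then have n1: "Im \<beta> * ln (real (M+1)) = of_int (2 * n1) * pi" by simp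
  have lnpos: "0 < ln (real (M+1)) - ln (real M)" using M1 by simp
  have lnle: "ln (real (M+1)) - ln (real M) \<le> 1 / real M"
  proof -
    have "ln (real (M+1)) - ln (real M) = ln ((real M + 1) / real M)" using M1 by (simp add: ln_div)
    also have "\<dots> \<le> (real M + 1) / real M - 1" using M1 by (intro ln_le_minus_one) auto
    also have "\<dots> = 1 / real M" using M1 by (simp add: field_simps)
    finally show ?thesis .
  qed
  have diff: "Im \<beta> * (ln (real (M+1)) - ln (real M)) = of_int (2 * (n1 - n0)) * pi"
    using n0 n1 by (simp add: algebra_simps)
  have "\<bar>Im \<beta> * (ln (real (M+1)) - ln (real M))\<bar> \<le> \<bar>Im \<beta>\<bar> * (1 / real M)"
  proof -
    have "\<bar>Im \<beta> * (ln (real (M+1)) - ln (real M))\<bar> = \<bar>Im \<beta>\<bar> * (ln (real (M+1)) - ln (real M))"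
      using lnpos by (simp add: abs_mult)
    also have "\<dots> \<le> \<bar>Im \<beta>\<bar> * (1 / real M)" by (rule mult_left_mono[OF lnle]) simp
    finally show ?thesis .
  qed
  also have "\<dots> < 1" using Mb M1 by (simp add: field_simps)
  finally have "\<bar>real_of_int (2 * (n1 - n0)) * pi\<bar> < 1" using diff by simp
  then have "n1 = n0"
  proof -
    assume a: "\<bar>real_of_int (2 * (n1 - n0)) * pi\<bar> < 1"
    show "n1 = n0"
    proof (rule ccontr)
      assume "n1 \<noteq> n0"
      then have i: "(2::int) \<le> \<bar>2 * (n1 - n0)\<bar>" by (cases "n1 < n0") auto
      then have "\<bar>real_of_int (2 * (n1 - n0))\<bar> \<ge> 2" by (metis of_int_abs of_int_le_iff of_int_numeral)
      then have "\<bar>real_of_int (2 * (n1 - n0)) * pi\<bar> \<ge> 2 * pi"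
        by (simp add: abs_mult mult_right_mono)
      then show False using a pi_gt3 by linarith
    qed
  qed
  then have "Im \<beta> * (ln (real (M+1)) - ln (real M)) = 0" using diff by simp
  then have "Im \<beta> = 0" using lnpos by simp
  then show ?thesis using re by (simp add: complex_eq_iff)
qed

lemma shift_nat:
  fixes G :: "real \<Rightarrow> complex"
  assumes per: "\<forall>t. G (t + 1) = \<mu> * G t"
  shows "G (t + real n) = \<mu> ^ n * G t"
proof (induction n)
  case (Suc n)
  have "G (t + real (Suc n)) = G ((t + real n) + 1)" by (simp add: algebra_simps)
  also have "\<dots> = \<mu> * G (t + real n)" using per by blast
  finally show ?case using Suc by simp
qed simp

lemma shift_int:
  fixes G :: "real \<Rightarrow> complex"
  assumes per: "\<forall>t. G (t + 1) = \<mu> * G t" and mu: "\<mu> \<noteq> 0"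
  shows "G (t + of_int j) = \<mu> powi j * G t"
proof (cases "j \<ge> 0")
  case True
  then obtain n where "j = int n" by (metis nonneg_int_cases)
  then show ?thesis using shift_nat[OF per, of t n] by simp
next
  case False
  then have "-j \<ge> 0" by simp
  then obtain n where "-j = int n" using nonneg_int_cases by blast
  then have j: "j = - int n" by simp
  have "G t = G ((t - real n) + real n)" by simp
  also have "\<dots> = \<mu> ^ n * G (t - real n)" by (rule shift_nat[OF per])
  finally have "G (t - real n) = G t / \<mu> ^ n" using mu by (simp add: field_simps)
  then show ?thesis using j mu by (simp add: power_int_minus divide_inverse mult.commute)
qed

lemma powr_zero_c: "z \<noteq> 0 \<Longrightarrow> (z::complex) powr 0 = 1"
  by (simp add: powr_def)

lemma decomp:
  fixes t :: real and p :: int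
  assumes "h t = (\<i> - complex_of_real t) powr (2 - r) * g t"
  shows "g t = (\<i> - complex_of_real t) powr (r - 2 - of_int p) * (h t * (\<i> - complex_of_real t) powi p)"
proof -
  define z where "z = \<i> - complex_of_real t"
  have z0: "z \<noteq> 0" unfolding z_def by (auto simp: complex_eq_iff)
  have e: "(r - 2 - of_int p) + (2 - r) + of_int p = (0::complex)" by simp
  have "z powr ((r - 2 - of_int p) + (2 - r) + of_int p) = z powr (r - 2 - of_int p) * z powr (2 - r) * z powr of_int p"
    by (simp only: powr_add)
  moreover have "z powr of_int p = z powi p" using z0 by (intro complex_powr_of_int disjI1)
  moreover have "z powr 0 = 1" using z0 by (rule powr_zero_c)
  ultimately have "1 = z powr (r - 2 - of_int p) * z powr (2 - r) * z powi p"
    unfolding e by simp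
  then have "z powr (r - 2 - of_int p) * (z powr (2 - r) * z powi p) = 1" by (simp add: mult.assoc)
  then show ?thesis using assms unfolding z_def[symmetric]
    by (metis (no_types, lifting) mult.commute mult.left_commute mult_1)
qed

lemma e_bound:
  fixes t :: real
  assumes "Re \<beta> \<le> 0"
  shows "norm ((\<i> - complex_of_real t) powr \<beta>) \<le> exp (\<bar>Im \<beta>\<bar> * pi)"
proof -
  define z where "z = \<i> - complex_of_real t"
  have n1: "norm z \<ge> 1" unfolding z_def
    using abs_Im_le_cmod[of "\<i> - complex_of_real t"] by simp
  have "norm z powr Re \<beta> \<le> norm z powr 0" using n1 assms by (intro powr_mono) auto
  then have A: "norm z powr Re \<beta> \<le> 1" using n1 by (auto split: if_splits)
  have "- Im \<beta> * Arg z \<le> \<bar>Im \<beta>\<bar> * pi"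
  proof -
    have "\<bar>Arg z\<bar> \<le> pi" using mpi_less_Arg[of z] Arg_le_pi[of z] by linarith
    then have "\<bar>- Im \<beta> * Arg z\<bar> \<le> \<bar>Im \<beta>\<bar> * pi" by (simp add: abs_mult mult_left_mono)
    then show ?thesis by linarith
  qed
  then have B: "exp (- Im \<beta> * Arg z) \<le> exp (\<bar>Im \<beta>\<bar> * pi)" by simp
  have "norm (z powr \<beta>) = norm z powr Re \<beta> * exp (- Im \<beta> * Arg z)" by (rule norm_powr_complex)
  also have "\<dots> \<le> 1 * exp (\<bar>Im \<beta>\<bar> * pi)" using A B by (intro mult_mono) auto
  finally show ?thesis unfolding z_def by simp
qed

lemma one_powr_c: "(1::complex) powr z = 1" by (simp add: powr_def)

lemma U_main:
  fixes g h :: "real \<Rightarrow> complex" and lam r :: complex and F :: "real filter" and \<sigma> :: int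
  assumes lam1: "norm lam = 1"
    and per: "\<forall>t. g (t + 1) = lam * g t"
    and hdef: "\<forall>t. h t = (\<i> - complex_of_real t) powr (2 - r) * g t"
    and F: "F \<le> at_infinity"
    and sig: "\<sigma> = 1 \<or> \<sigma> = -1"
    and seq: "\<And>s m. m \<ge> 1 \<Longrightarrow> filterlim (\<lambda>n::nat. s + real_of_int (\<sigma> * int m * int n)) F sequentially"
    and ae: "asymp_exp h k b F"
  shows "(\<forall>t. g t = 0) \<or> (\<exists>c. (\<forall>t. g t = c) \<and> lam = 1 \<and> (\<exists>m::int. r = of_int m \<and> k + 2 \<le> m))"
proof (cases "\<forall>t. g t = 0")
  case True then show ?thesis by blast
next
  case False
  then obtain t0 where gt0: "g t0 \<noteq> 0" by blast
  have lam0: "lam \<noteq> 0" using lam1 by auto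
  have shift: "g (s + of_int j) = lam powi j * g s" for s j by (rule shift_int[OF per lam0])
  have normsh: "norm (g (s + of_int j)) = norm (g s)" for s j
    using shift[of s j] lam1 by (simp add: norm_mult norm_power_int)
  define sq where "sq = (\<lambda>s (m::nat) (n::nat). s + real_of_int (\<sigma> * int m * int n))"
  have sqF: "filterlim (sq s m) F sequentially" if "m \<ge> 1" for s m
    unfolding sq_def using seq[OF that] .
  have normsq: "norm (g (sq s m n)) = norm (g s)" for s m n
    unfolding sq_def using normsh .
  have inv0: "((\<lambda>t::real. inverse t) \<longlongrightarrow> 0) F"
    using tendsto_mono[OF F tendsto_inverse_0] by simp
  have vdecomp: "g t = (\<i> - complex_of_real t) powr (r - 2 - of_int p) * (h t * (\<i> - complex_of_real t) powi p)" for t p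
    by (rule decomp) (use hdef in blast)
  have vsplit: "eventually (\<lambda>t. (h t * complex_of_real t powi p) * ((\<i> - complex_of_real t) / complex_of_real t) powi p =
      h t * (\<i> - complex_of_real t) powi p) F" for p
    using ev_inf[OF F, of 1] by eventually_elim (auto simp: power_int_divide_distrib)
  show ?thesis
  proof (cases "\<forall>n. k \<le> n \<longrightarrow> b n = 0")
    case True
    define p where "p = max k \<lceil>Re (r - 2)\<rceil>"
    have pk: "k \<le> p" unfolding p_def by simp
    have rep: "Re (r - 2 - of_int p) \<le> 0" unfolding p_def by simp linarith
    have l1: "((\<lambda>t. h t * complex_of_real t powi p) \<longlongrightarrow> b p) F"
      by (rule lead[OF F ae pk]) (use True in auto)
    then have l1': "((\<lambda>t. h t * complex_of_real t powi p) \<longlongrightarrow> 0) F" using True pk by simp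
    have "((\<lambda>t. (h t * complex_of_real t powi p) * ((\<i> - complex_of_real t) / complex_of_real t) powi p)
            \<longlongrightarrow> 0 * (-1) powi p) F"
      by (intro tendsto_mult l1' ratio_lim[OF F])
    then have vl: "((\<lambda>t. h t * (\<i> - complex_of_real t) powi p) \<longlongrightarrow> 0) F"
      using vsplit[of p] by (auto elim: tendsto_cong[THEN iffD1, rotated])
    have gl: "(g \<longlongrightarrow> 0) F"
    proof (rule Lim_null_comparison)
      show "eventually (\<lambda>t. norm (g t) \<le> exp (\<bar>Im (r - 2 - of_int p)\<bar> * pi) * norm (h t * (\<i> - complex_of_real t) powi p)) F"
      proof (intro always_eventually allI)
        fix t
        have "norm (g t) = norm ((\<i> - complex_of_real t) powr (r - 2 - of_int p)) * norm (h t * (\<i> - complex_of_real t) powi p)"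
          by (subst vdecomp[of t p]) (simp add: norm_mult)
        also have "\<dots> \<le> exp (\<bar>Im (r - 2 - of_int p)\<bar> * pi) * norm (h t * (\<i> - complex_of_real t) powi p)"
          by (intro mult_right_mono e_bound rep) simp
        finally show "norm (g t) \<le> exp (\<bar>Im (r - 2 - of_int p)\<bar> * pi) * norm (h t * (\<i> - complex_of_real t) powi p)" .
      qed
      have "((\<lambda>t. exp (\<bar>Im (r - 2 - of_int p)\<bar> * pi) * norm (h t * (\<i> - complex_of_real t) powi p))
           \<longlongrightarrow> exp (\<bar>Im (r - 2 - of_int p)\<bar> * pi) * 0) F"
        by (intro tendsto_mult tendsto_const tendsto_norm_zero vl)
      then show "((\<lambda>t. exp (\<bar>Im (r - 2 - of_int p)\<bar> * pi) * norm (h t * (\<i> - complex_of_real t) powi p)) \<longlongrightarrow> 0) F"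
        by simp
    qed
    have "(\<lambda>n. g (sq t0 1 n)) \<longlonglongrightarrow> 0" by (rule filterlim_compose[OF gl sqF]) simp
    then have "(\<lambda>n. norm (g (sq t0 1 n))) \<longlonglongrightarrow> 0" by (rule tendsto_norm_zero)
    then have "norm (g t0) = 0" using normsq by (simp add: LIMSEQ_const_iff)
    then show ?thesis using gt0 by simp
  next
    case False
    then obtain n1 where n1: "k \<le> n1" "b n1 \<noteq> 0" by blast
    define j where "j = (LEAST j::nat. b (k + int j) \<noteq> 0)"
    define p where "p = k + int j"
    have bp: "b p \<noteq> 0" unfolding p_def j_def by (rule LeastI[of _ "nat (n1 - k)"]) (use n1 in simp)
    have pk: "k \<le> p" unfolding p_def by simp
    have bz: "\<forall>n. k \<le> n \<and> n < p \<longrightarrow> b n = 0"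
    proof (intro allI impI)
      fix n assume nn: "k \<le> n \<and> n < p"
      then have "nat (n - k) < j" unfolding p_def by linarith
      then have "b (k + int (nat (n - k))) = 0" unfolding j_def using not_less_Least by blast
      then show "b n = 0" using nn by simp
    qed
    define \<beta> where "\<beta> = r - 2 - of_int p"
    define e where "e = (\<lambda>t::real. (\<i> - complex_of_real t) powr \<beta>)"
    define v where "v = (\<lambda>t. h t * (\<i> - complex_of_real t) powi p)"
    define v0 where "v0 = b p * (-1) powi p"
    have v00: "v0 \<noteq> 0" using bp by (simp add: v0_def)
    have gev: "g t = e t * v t" for t unfolding e_def v_def \<beta>_def by (rule vdecomp)
    have e0: "e t \<noteq> 0" for t unfolding e_def by (rule powr_nz) simp
    have vl: "(v \<longlongrightarrow> v0) F"
    proof -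
      have "((\<lambda>t. (h t * complex_of_real t powi p) * ((\<i> - complex_of_real t) / complex_of_real t) powi p)
             \<longlongrightarrow> b p * (-1) powi p) F"
        by (intro tendsto_mult lead[OF F ae pk bz] ratio_lim[OF F])
      then show ?thesis unfolding v_def v0_def
        using vsplit[of p] by (auto elim: tendsto_cong[THEN iffD1, rotated])
    qed
    have vseq: "(\<lambda>n. v (sq s m n)) \<longlonglongrightarrow> v0" if "m \<ge> 1" for s m
      by (rule filterlim_compose[OF vl sqF[OF that]])
    have gsq0: "g (sq t0 m n) \<noteq> 0" for m n using normsq gt0 by (metis norm_eq_zero)
    have vsq0: "v (sq t0 m n) \<noteq> 0" for m n using gsq0 gev by (metis mult_zero_right)
    have invsq: "(\<lambda>n. inverse (sq s m n)) \<longlonglongrightarrow> 0" if "m \<ge> 1" for s m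
      by (rule filterlim_compose[OF inv0 sqF[OF that]])
    have sqnz: "eventually (\<lambda>n. sq s m n \<noteq> 0) sequentially" if "m \<ge> 1" for s m
    proof -
      have "eventually (\<lambda>t::real. t \<noteq> 0) F" using ev_inf[OF F, of 1] by eventually_elim auto
      then show ?thesis using sqF[OF that] filterlim_iff by blast
    qed
    have sqnz1: "eventually (\<lambda>n. sq t0 1 n \<noteq> 0) sequentially" by (rule sqnz) simp
    have lam_1: "lam = 1"
    proof -
      define c where "c = sq t0 1"
      define a where "a = (\<lambda>n. c n + 1)"
      have ac: "(\<lambda>n. a n / c n) \<longlonglongrightarrow> 1"
      proof -
        have "(\<lambda>n. 1 + inverse (c n)) \<longlonglongrightarrow> 1 + 0" unfolding c_def by (intro tendsto_intros invsq) simp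
        moreover have "eventually (\<lambda>n. 1 + inverse (c n) = a n / c n) sequentially"
          using sqnz1 unfolding c_def a_def by eventually_elim (simp add: field_simps)
        ultimately show ?thesis by (auto elim: tendsto_cong[THEN iffD1, rotated])
      qed
      have E: "(\<lambda>n. e (a n) / e (c n)) \<longlonglongrightarrow> complex_of_real 1 powr \<beta>"
        unfolding e_def by (rule U2[OF ac _ _ sqnz[of 1 t0, folded c_def]]) (auto simp: c_def intro: invsq)
      then have E': "(\<lambda>n. e (a n) / e (c n)) \<longlonglongrightarrow> 1" by (simp add: one_powr_c)
      have a_sq: "a = sq (t0 + 1) 1" unfolding a_def c_def sq_def by (simp add: fun_eq_iff)
      have Va: "(\<lambda>n. v (a n)) \<longlonglongrightarrow> v0" unfolding a_sq by (rule vseq) simp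
      have Vc: "(\<lambda>n. v (c n)) \<longlonglongrightarrow> v0" unfolding c_def by (rule vseq) simp
      have "(\<lambda>n. (e (a n) / e (c n)) * (v (a n) / v (c n))) \<longlonglongrightarrow> 1 * (v0 / v0)"
        by (intro tendsto_mult E' tendsto_divide Va Vc v00)
      moreover have "(e (a n) / e (c n)) * (v (a n) / v (c n)) = lam" for n
      proof -
        have ga: "g (a n) = lam * g (c n)" unfolding a_def using per by blast
        have gc: "g (c n) \<noteq> 0" unfolding c_def by (rule gsq0)
        have "(e (a n) / e (c n)) * (v (a n) / v (c n)) = g (a n) / g (c n)"
          using gc by (simp add: gev)
        also have "\<dots> = lam" using ga gc by simp
        finally show ?thesis .
      qed
      ultimately have "(\<lambda>n. lam) \<longlonglongrightarrow> 1" using v00 by simp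
      then show ?thesis by (simp add: LIMSEQ_const_iff)
    qed
    have gsq: "g (sq s m n) = g s" for s m n
    proof -
      have "g (sq s m n) = lam powi (\<sigma> * int m * int n) * g s" unfolding sq_def by (rule shift)
      then show ?thesis using lam_1 by simp
    qed
    have beta0: "\<beta> = 0"
    proof (rule beta_zero, intro allI impI)
      fix m :: nat assume m1: "m \<ge> 1"
      define c where "c = sq t0 1"
      define a where "a = sq t0 m"
      have ac: "(\<lambda>n. a n / c n) \<longlonglongrightarrow> real m"
      proof -
        have sg0: "real_of_int \<sigma> \<noteq> 0" using sig by auto
        have "(\<lambda>n. (t0 * inverse (real n) + real_of_int \<sigma> * real m) / (t0 * inverse (real n) + real_of_int \<sigma>))
              \<longlonglongrightarrow> (t0 * 0 + real_of_int \<sigma> * real m) / (t0 * 0 + real_of_int \<sigma>)"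
          using sg0 by (intro tendsto_intros lim_inverse_n) auto
        then have L: "(\<lambda>n. (t0 * inverse (real n) + real_of_int \<sigma> * real m) / (t0 * inverse (real n) + real_of_int \<sigma>))
              \<longlonglongrightarrow> real m" using sg0 by simp
        have "eventually (\<lambda>n. (t0 * inverse (real n) + real_of_int \<sigma> * real m) / (t0 * inverse (real n) + real_of_int \<sigma>)
               = a n / c n) sequentially"
          using eventually_gt_at_top[of "0::nat"]
        proof eventually_elim
          case (elim n)
          then have n0: "real n \<noteq> 0" by simp
          have "a n = (t0 * inverse (real n) + real_of_int \<sigma> * real m) * real n"
            unfolding a_def sq_def using n0 by (simp add: field_simps)
          moreover have "c n = (t0 * inverse (real n) + real_of_int \<sigma>) * real n"
            unfolding c_def sq_def using n0 by (simp add: field_simps)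
          ultimately show ?case using n0 by simp
        qed
        with L show ?thesis by (auto elim: tendsto_cong[THEN iffD1, rotated])
      qed
      have E: "(\<lambda>n. e (a n) / e (c n)) \<longlonglongrightarrow> complex_of_real (real m) powr \<beta>"
        unfolding e_def by (rule U2[OF ac _ _ sqnz[of 1 t0, folded c_def]]) (use m1 in \<open>auto simp: c_def intro: invsq\<close>)
      have "(\<lambda>n. v (c n) / v (a n)) \<longlonglongrightarrow> v0 / v0"
        unfolding a_def c_def by (intro tendsto_divide vseq v00 m1) simp
      moreover have "v (c n) / v (a n) = e (a n) / e (c n)" for n
      proof -
        have "e (a n) * v (a n) = e (c n) * v (c n)" using gsq gev unfolding a_def c_def by metis
        then show ?thesis using e0[of "c n"] vsq0[of m n] unfolding a_def
          by (simp add: field_simps)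
      qed
      ultimately have "(\<lambda>n. e (a n) / e (c n)) \<longlonglongrightarrow> 1" using v00 by simp
      with E show "complex_of_real (real m) powr \<beta> = 1" using LIMSEQ_unique by blast
    qed
    have gv: "g t = v t" for t using gev[of t] unfolding e_def beta0 by (simp add: powr_zero_c complex_eq_iff)
    have gconst: "g s = v0" for s
    proof -
      have "(\<lambda>n. g (sq s 1 n)) \<longlonglongrightarrow> v0" unfolding gv by (rule vseq) simp
      then show ?thesis using gsq by (simp add: LIMSEQ_const_iff)
    qed
    have "r = of_int (p + 2)" using beta0 unfolding \<beta>_def by (simp add: algebra_simps)
    moreover have "k + 2 \<le> p + 2" using pk by simp
    ultimately have "\<exists>m::int. r = of_int m \<and> k + 2 \<le> m" by blast
    then show ?thesis using gconst lam_1 by blast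
  qed
qed

lemma poly_exp:
  fixes c :: real assumes c: "c > 0"
  shows "((\<lambda>t. t ^ M * exp (- c * t)) \<longlongrightarrow> 0) at_top"
proof -
  have lim: "filterlim (\<lambda>t. c * t) at_top at_top"
    by (rule filterlim_tendsto_pos_mult_at_top[OF tendsto_const c filterlim_ident])
  have "((\<lambda>t. (c * t) ^ M / exp (c * t)) \<longlongrightarrow> 0) at_top"
    by (rule filterlim_compose[OF tendsto_power_div_exp_0 lim])
  then have "((\<lambda>t. (c * t) ^ M / exp (c * t) / c ^ M) \<longlongrightarrow> 0 / c ^ M) at_top"
    by (intro tendsto_divide tendsto_const) (use c in auto)
  moreover have "(c * t) ^ M / exp (c * t) / c ^ M = t ^ M * exp (- c * t)" for t
    using c by (simp add: power_mult_distrib exp_minus field_simps)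
  ultimately show ?thesis by simp
qed

lemma E1:
  fixes G :: "real \<Rightarrow> complex"
  assumes per: "\<forall>t. G (t + 1) = \<mu> * G t" and mu: "norm \<mu> > 1"
    and ev: "eventually (\<lambda>t. norm (G t) \<le> K * \<bar>t\<bar> ^ M) at_top"
  shows "G s = 0"
proof (rule ccontr)
  assume G0: "G s \<noteq> 0"
  define c where "c = ln (norm \<mu>)"
  have c: "c > 0" using mu unfolding c_def by (intro ln_gt_zero)
  have sl: "filterlim (\<lambda>n. s + real n) at_top sequentially"
    by (rule filterlim_tendsto_add_at_top[OF tendsto_const filterlim_real_sequentially])
  have L: "(\<lambda>n. K * exp (c * s) * ((s + real n) ^ M * exp (- c * (s + real n)))) \<longlonglongrightarrow> K * exp (c * s) * 0"
    by (intro tendsto_mult tendsto_const filterlim_compose[OF poly_exp[OF c] sl])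
  then have "eventually (\<lambda>n. K * exp (c * s) * ((s + real n) ^ M * exp (- c * (s + real n))) < norm (G s)) sequentially"
    using G0 by (intro order_tendstoD(2)) auto
  moreover have "eventually (\<lambda>n. norm (G (s + real n)) \<le> K * \<bar>s + real n\<bar> ^ M) sequentially"
    using filterlim_iff[THEN iffD1, OF sl] ev by blast
  moreover have "eventually (\<lambda>n. s + real n \<ge> 0) sequentially"
    using filterlim_iff[THEN iffD1, OF sl] eventually_ge_at_top[of 0] by blast
  ultimately have "eventually (\<lambda>n. False) sequentially"
  proof eventually_elim
    case (elim n)
    have "norm (G (s + real n)) = norm \<mu> ^ n * norm (G s)"
      using shift_nat[OF per, of s n] by (simp add: norm_mult norm_power)
    also have "norm \<mu> ^ n = exp (c * real n)"
    proof -
      have "exp (c * real n) = exp (real n * ln (norm \<mu>))" by (simp add: c_def mult.commute)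
      also have "\<dots> = exp (ln (norm \<mu>)) ^ n" by (rule exp_of_nat_mult)
      also have "\<dots> = norm \<mu> ^ n" using mu by (subst exp_ln) auto
      finally show ?thesis by simp
    qed
    finally have "exp (c * real n) * norm (G s) \<le> K * (s + real n) ^ M"
      using elim(2,3) by simp
    then have "norm (G s) \<le> K * (s + real n) ^ M * exp (- c * real n)"
      by (simp add: exp_minus field_simps)
    also have "\<dots> = K * exp (c * s) * ((s + real n) ^ M * exp (- c * (s + real n)))"
      by (simp add: algebra_simps exp_add[symmetric])
    finally show False using elim(1) by simp
  qed
  then show False by simp
qed

lemma E2:
  fixes G :: "real \<Rightarrow> complex"
  assumes per: "\<forall>t. G (t + 1) = \<mu> * G t" and mu0: "norm \<mu> > 0" and mu: "norm \<mu> < 1"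
    and cont: "continuous_on UNIV G"
  shows "\<exists>C. eventually (\<lambda>t. norm (G t) \<le> C * \<bar>t\<bar> powr (- real_of_int N)) at_top"
proof -
  obtain B where B0: "B \<ge> 0" and B: "\<And>x. x \<in> {0..1} \<Longrightarrow> norm (G x) \<le> B"
    using continuous_on_compact_bound[of "{0..1::real}" G] cont continuous_on_subset by blast
  define x where "x = norm \<mu>"
  define c where "c = - ln x"
  have c: "c > 0" using mu mu0 unfolding c_def x_def by simp
  define K where "K = nat \<bar>N\<bar>"
  have "eventually (\<lambda>t. t ^ K * exp (- c * t) < 1) at_top"
    by (rule order_tendstoD(2)[OF poly_exp[OF c]]) simp
  then have "eventually (\<lambda>t. norm (G t) \<le> (B / x) * \<bar>t\<bar> powr (- real_of_int N)) at_top"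
    using eventually_ge_at_top[of 1]
  proof eventually_elim
    case (elim t)
    define n where "n = nat \<lfloor>t\<rfloor>"
    have tn: "real n \<le> t" "t < real n + 1" unfolding n_def using elim(2) by linarith+
    have "G t = \<mu> ^ n * G (t - real n)" using shift_nat[OF per, of "t - real n" n] by simp
    then have "norm (G t) = x ^ n * norm (G (t - real n))" unfolding x_def by (simp add: norm_mult norm_power)
    also have "\<dots> \<le> x ^ n * B" using B[of "t - real n"] tn by (intro mult_left_mono) (auto simp: x_def)
    also have "x ^ n = exp (- c * real n)"
    proof -
      have "exp (- c * real n) = exp (real n * ln x)" by (simp add: c_def)
      also have "\<dots> = exp (ln x) ^ n" by (rule exp_of_nat_mult)
      also have "\<dots> = x ^ n" using mu0 x_def by simp
      finally show ?thesis by simp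
    qed
    also have "exp (- c * real n) \<le> exp (- c * (t - 1))" using tn c by (simp add: mult_left_mono)
    also have "exp (- c * (t - 1)) = exp (- c * t) / x" unfolding c_def using mu0 x_def
      by (simp add: exp_diff algebra_simps exp_minus)
    also have "exp (- c * t) \<le> t powr (- real_of_int N)"
    proof -
      have tK: "t ^ K > 0" using elim(2) by simp
      have "exp (- c * t) < 1 / t ^ K" using elim(1) tK by (simp add: field_simps)
      also have "1 / t ^ K = t powr (- real K)" using elim(2) by (simp add: powr_minus powr_realpow divide_inverse)
      also have "\<dots> \<le> t powr (- real_of_int N)" using elim(2) unfolding K_def by (intro powr_mono) auto
      finally show ?thesis by simp
    qed
    finally have "norm (G t) \<le> t powr (- real_of_int N) / x * B"
      using B0 mu0 x_def by (simp add: divide_right_mono mult_right_mono)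
    then show ?case using elim(2) by (simp add: field_simps)
  qed
  then show ?thesis by blast
qed

lemma growth:
  fixes g h :: "real \<Rightarrow> complex"
  assumes F: "F \<le> at_infinity"
    and hdef: "\<forall>t. h t = (\<i> - complex_of_real t) powr (2 - r) * g t"
    and ae: "asymp_exp h k b F"
  shows "\<exists>K M. eventually (\<lambda>t. norm (g t) \<le> K * \<bar>t\<bar> ^ M) F"
proof -
  define q where "q = max k \<lceil>Re (r - 2)\<rceil>"
  have qk: "k \<le> q" unfolding q_def by simp
  have rep: "Re (r - 2 - of_int q) \<le> 0" unfolding q_def by simp linarith
  define E where "E = exp (\<bar>Im (r - 2 - of_int q)\<bar> * pi)"
  obtain C where C: "eventually (\<lambda>t. norm (h t - (\<Sum>n\<in>{k..<k}. b n * complex_of_real t powi (- n)))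
        \<le> C * \<bar>t\<bar> powr (- real_of_int k)) F"
    using ae unfolding asymp_exp_def by blast
  have rl: "eventually (\<lambda>t. norm (((\<i> - complex_of_real t) / complex_of_real t) powi q) < 2) F"
  proof -
    have "((\<lambda>t. norm (((\<i> - complex_of_real t) / complex_of_real t) powi q)) \<longlongrightarrow> norm ((-1::complex) powi q)) F"
      by (intro tendsto_norm ratio_lim[OF F])
    then show ?thesis by (rule order_tendstoD(2)) (simp add: norm_power_int)
  qed
  have "eventually (\<lambda>t. norm (g t) \<le> (E * (\<bar>C\<bar> * 2)) * \<bar>t\<bar> ^ nat (q - k)) F"
    using C rl ev_inf[OF F, of 1]
  proof eventually_elim
    case (elim t)
    have t0: "t \<noteq> 0" using elim(3) by auto
    have h1: "norm (h t) \<le> C * \<bar>t\<bar> powi (- k)"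
    proof -
      have "\<bar>t\<bar> powr (- real_of_int k) = \<bar>t\<bar> powr real_of_int (- k)" by simp
      also have "\<dots> = \<bar>t\<bar> powi (- k)" using t0 by (intro powr_real_of_int') auto
      finally show ?thesis using elim(1) by simp
    qed
    have "h t * (\<i> - complex_of_real t) powi q = h t * (((\<i> - complex_of_real t) / complex_of_real t) powi q * complex_of_real t powi q)"
      using t0 by (simp add: power_int_divide_distrib)
    then have "norm (h t * (\<i> - complex_of_real t) powi q) = norm (h t * (((\<i> - complex_of_real t) / complex_of_real t) powi q * complex_of_real t powi q))"
      by (rule arg_cong[where f=norm])
    also have "\<dots> = norm (h t) * norm (((\<i> - complex_of_real t) / complex_of_real t) powi q) * \<bar>t\<bar> powi q"
      by (simp add: norm_mult norm_power_int mult.assoc)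
    also have "\<dots> \<le> (C * \<bar>t\<bar> powi (- k)) * 2 * \<bar>t\<bar> powi q"
      using h1 elim(2) order_trans[OF norm_ge_zero h1] by (intro mult_right_mono mult_mono) auto
    also have "\<dots> = C * 2 * (\<bar>t\<bar> powi (- k) * \<bar>t\<bar> powi q)" by (simp add: algebra_simps)
    also have "\<bar>t\<bar> powi (- k) * \<bar>t\<bar> powi q = \<bar>t\<bar> ^ nat (q - k)"
    proof -
      have "\<bar>t\<bar> powi (- k) * \<bar>t\<bar> powi q = \<bar>t\<bar> powi (- k + q)"
        by (rule power_int_add[symmetric]) (use t0 in simp)
      also have "- k + q = int (nat (q - k))" using qk by simp
      also have "\<bar>t\<bar> powi int (nat (q - k)) = \<bar>t\<bar> ^ nat (q - k)" by (rule power_int_of_nat)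
      finally show ?thesis .
    qed
    also have "C * 2 * \<bar>t\<bar> ^ nat (q - k) \<le> \<bar>C\<bar> * 2 * \<bar>t\<bar> ^ nat (q - k)"
      by (intro mult_right_mono) auto
    finally have v: "norm (h t * (\<i> - complex_of_real t) powi q) \<le> \<bar>C\<bar> * 2 * \<bar>t\<bar> ^ nat (q - k)" .
    have "norm (g t) = norm ((\<i> - complex_of_real t) powr (r - 2 - of_int q)) * norm (h t * (\<i> - complex_of_real t) powi q)"
      by (subst decomp[of h t r g q]) (use hdef in \<open>simp_all add: norm_mult\<close>)
    also have "\<dots> \<le> E * (\<bar>C\<bar> * 2 * \<bar>t\<bar> ^ nat (q - k))"
      unfolding E_def by (intro mult_mono e_bound rep v) auto
    finally show ?case by (simp add: algebra_simps)
  qed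
  then show ?thesis by blast
qed

lemma ev_bot_top: "eventually P (at_bot::real filter) \<Longrightarrow> eventually (\<lambda>s. P (-s)) at_top"
  by (simp add: at_bot_mirror eventually_filtermap)

lemma ev_top_bot: "eventually (\<lambda>s. P (-s)) at_top \<Longrightarrow> eventually P (at_bot::real filter)"
  by (simp add: at_bot_mirror eventually_filtermap)

lemma seq_top: "m \<ge> 1 \<Longrightarrow> filterlim (\<lambda>n::nat. s + real_of_int (1 * int m * int n)) at_top sequentially"
proof -
  assume m: "m \<ge> 1"
  have "filterlim (\<lambda>n::nat. real m * real n) at_top sequentially"
    using m by (intro filterlim_tendsto_pos_mult_at_top[OF tendsto_const _ filterlim_real_sequentially]) auto
  then have "filterlim (\<lambda>n::nat. s + real m * real n) at_top sequentially"
    by (rule filterlim_tendsto_add_at_top[OF tendsto_const])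
  then show ?thesis by simp
qed

lemma seq_bot: "m \<ge> 1 \<Longrightarrow> filterlim (\<lambda>n::nat. s + real_of_int (-1 * int m * int n)) at_bot sequentially"
proof -
  assume m: "m \<ge> 1"
  have "filterlim (\<lambda>n::nat. real m * real n) at_top sequentially"
    using m by (intro filterlim_tendsto_pos_mult_at_top[OF tendsto_const _ filterlim_real_sequentially]) auto
  then have "filterlim (\<lambda>n::nat. - s + real m * real n) at_top sequentially"
    by (rule filterlim_tendsto_add_at_top[OF tendsto_const])
  then have "filterlim (\<lambda>n::nat. - (s - real m * real n)) at_top sequentially" by simp
  then have "filterlim (\<lambda>n::nat. s - real m * real n) at_bot sequentially"
    by (simp add: filterlim_uminus_at_bot)
  then show ?thesis by simp
qed

lemma filt_eps: "eps \<in> {1, -1::int} \<Longrightarrow>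
   filtermap (\<lambda>s. real_of_int eps * s) at_top = at_top \<or> filtermap (\<lambda>s. real_of_int eps * s) at_top = (at_bot :: real filter)"
proof -
  assume "eps \<in> {1, -1::int}"
  then consider "eps = 1" | "eps = -1" by auto
  then show ?thesis
  proof cases
    case 1 then show ?thesis by (simp add: filtermap_ident)
  next
    case 2
    have "(\<lambda>s::real. real_of_int eps * s) = uminus" using 2 by (simp add: fun_eq_iff)
    then show ?thesis by (simp add: at_bot_mirror)
  qed
qed

theorem lemma3p4:
  fixes r lam :: complex and f :: "complex \<Rightarrow> complex"
  assumes "lam \<noteq> 0"
    and "f \<in> D_omega_inf r"
    and "\<forall>t. Im t < 0 \<longrightarrow> f (t + 1) = lam * f t"
  shows
   "(\<forall>k b. asymp_exp (\<lambda>t. Pop r f (complex_of_real t)) k b at_top \<and>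
            asymp_exp (\<lambda>t. Pop r f (complex_of_real t)) k b at_bot \<longrightarrow>
      (if lam = 1 \<and> r \<in> \<int> then
         (\<exists>c. (\<forall>t. Im t \<le> 0 \<longrightarrow> f t = c) \<and>
              (c \<noteq> 0 \<longrightarrow> (\<exists>m::int. r = of_int m \<and> k + 2 \<le> m)))
       else (\<forall>t. Im t \<le> 0 \<longrightarrow> f t = 0)))
  \<and> (\<forall>(eps::int) k b. eps \<in> {1, -1} \<and>
        asymp_exp (\<lambda>t. Pop r f (complex_of_real t)) k b (filtermap (\<lambda>s. real_of_int eps * s) at_top) \<longrightarrow>
      (if lam = 1 \<and> (\<exists>m::int. r = of_int m \<and> k + 2 \<le> m) then
         (\<exists>c. \<forall>t. Im t \<le> 0 \<longrightarrow> f t = c)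
       else if norm lam = 1 then (\<forall>t. Im t \<le> 0 \<longrightarrow> f t = 0)
       else asymp_zero (\<lambda>t. f (complex_of_real t)) (filtermap (\<lambda>s. real_of_int eps * s) at_top)))"
proof -
  note lam0 = assms(1) and fD = assms(2) and perf = assms(3)
  define g where "g = (\<lambda>t::real. f (complex_of_real t))"
  define h where "h = (\<lambda>t::real. Pop r f (complex_of_real t))"
  have hdef: "\<forall>t. h t = (\<i> - complex_of_real t) powr (2 - r) * g t"
    by (simp add: h_def g_def Pop_def)
  have contg: "continuous_on UNIV g" unfolding g_def by (rule D_props(1)[OF fD perf])
  have per: "\<forall>t. g (t + 1) = lam * g t"
    using D_props(2)[OF fD perf] unfolding g_def by simp
  have lift: "\<forall>z. Im z \<le> 0 \<longrightarrow> f z = c" if "\<forall>x. g x = c" for c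
    using D_props(3)[OF fD perf] that unfolding g_def by blast
  define gm where "gm = (\<lambda>s. g (- s))"
  have pergm: "\<forall>s. gm (s + 1) = inverse lam * gm s"
  proof
    fix s
    have "g (- s) = g ((- s - 1) + 1)" by simp
    also have "\<dots> = lam * g (- s - 1)" using per by blast
    finally have X: "g (- s) = lam * g (- s - 1)" .
    have "gm (s + 1) = g (- s - 1)" unfolding gm_def by (rule arg_cong[where f=g]) simp
    also have "\<dots> = inverse lam * g (- s)" using X lam0 by simp
    finally show "gm (s + 1) = inverse lam * gm s" unfolding gm_def .
  qed
  have contgm: "continuous_on UNIV gm" unfolding gm_def
    by (intro continuous_on_compose2[OF contg] continuous_intros) auto
  have UF: "(\<forall>t. g t = 0) \<or> (\<exists>c. (\<forall>t. g t = c) \<and> lam = 1 \<and> (\<exists>m::int. r = of_int m \<and> k + 2 \<le> m))"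
    if F: "F = at_top \<or> F = at_bot" and l1: "norm lam = 1" and ae: "asymp_exp h k b F" for F k b
    using F
  proof
    assume "F = at_top"
    then show ?thesis using U_main[where \<sigma>=1 and F=at_top, OF l1 per hdef at_top_le_at_infinity _ seq_top] ae by auto
  next
    assume "F = at_bot"
    then show ?thesis using U_main[where \<sigma>="-1" and F=at_bot, OF l1 per hdef at_bot_le_at_infinity _ seq_bot] ae by auto
  qed
  have az0: "asymp_zero g F" if "\<forall>t. g t = 0" for F
    unfolding asymp_zero_def using that by (auto intro!: exI[of _ 0])
  have Ztb: "\<forall>t. g t = 0" if hh: "norm lam > 1" "asymp_exp h k b at_top" for k b
  proof -
    obtain K M where "eventually (\<lambda>t. norm (g t) \<le> K * \<bar>t\<bar> ^ M) at_top"
      using growth[OF at_top_le_at_infinity hdef hh(2)] by blast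
    then show ?thesis using E1[OF per hh(1)] by blast
  qed
  have Zbs: "\<forall>t. g t = 0" if hh: "norm lam < 1" "asymp_exp h k b at_bot" for k b
  proof -
    obtain K M where "eventually (\<lambda>t. norm (g t) \<le> K * \<bar>t\<bar> ^ M) at_bot"
      using growth[OF at_bot_le_at_infinity hdef hh(2)] by blast
    then have ev: "eventually (\<lambda>s. norm (gm s) \<le> K * \<bar>s\<bar> ^ M) at_top"
      unfolding gm_def using ev_bot_top by fastforce
    have n: "norm (inverse lam) > 1" using hh(1) lam0 by (simp add: norm_inverse one_less_inverse)
    have "gm s = 0" for s by (rule E1[OF pergm n ev])
    then show ?thesis unfolding gm_def by (metis minus_minus)
  qed
  have Dts: "asymp_zero g at_top" if "norm lam < 1"
    unfolding asymp_zero_def using E2[OF per _ that contg] lam0 by auto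
  have Dbb: "asymp_zero g at_bot" if "norm lam > 1"
    unfolding asymp_zero_def
  proof
    fix N :: int
    have n0: "norm (inverse lam) > 0" "norm (inverse lam) < 1" using that lam0
      by (auto simp: norm_inverse inverse_less_1_iff)
    obtain C where "eventually (\<lambda>s. norm (gm s) \<le> C * \<bar>s\<bar> powr (- real_of_int N)) at_top"
      using E2[OF pergm n0 contgm] by blast
    then have "eventually (\<lambda>t. norm (g t) \<le> C * \<bar>t\<bar> powr (- real_of_int N)) at_bot"
      unfolding gm_def by (intro ev_top_bot) simp
    then show "\<exists>C. eventually (\<lambda>t. norm (g t) \<le> C * \<bar>t\<bar> powr (- real_of_int N)) at_bot" by blast
  qed
  have partii: "(if lam = 1 \<and> (\<exists>m::int. r = of_int m \<and> k + 2 \<le> m) then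
         (\<exists>c. \<forall>t. Im t \<le> 0 \<longrightarrow> f t = c)
       else if norm lam = 1 then (\<forall>t. Im t \<le> 0 \<longrightarrow> f t = 0)
       else asymp_zero g F)"
    if F: "F = at_top \<or> F = at_bot" and ae: "asymp_exp h k b F" for F k b
  proof (cases "lam = 1 \<and> (\<exists>m::int. r = of_int m \<and> k + 2 \<le> m)")
    case True
    then have "norm lam = 1" by simp
    from UF[OF F this ae] have "\<exists>c. \<forall>t. g t = c" by blast
    then show ?thesis using True lift by auto
  next
    case False
    show ?thesis
    proof (cases "norm lam = 1")
      case True
      from UF[OF F True ae] False have "\<forall>t. g t = 0" by blast
      then show ?thesis using False True lift by auto
    next
      case nl: False
      have "asymp_zero g F"
      proof (cases "norm lam > 1")
        case True
        show ?thesis using F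
        proof
          assume "F = at_top" then show ?thesis using Ztb[OF True] ae az0 by blast
        next
          assume "F = at_bot" then show ?thesis using Dbb[OF True] by simp
        qed
      next
        case False
        then have lt: "norm lam < 1" using nl by simp
        show ?thesis using F
        proof
          assume "F = at_top" then show ?thesis using Dts[OF lt] by simp
        next
          assume "F = at_bot" then show ?thesis using Zbs[OF lt] ae az0 by blast
        qed
      qed
      then show ?thesis by (simp only: if_not_P[OF False] if_not_P[OF nl])
    qed
  qed
  have parti: "(if lam = 1 \<and> r \<in> \<int> then
         (\<exists>c. (\<forall>t. Im t \<le> 0 \<longrightarrow> f t = c) \<and>
              (c \<noteq> 0 \<longrightarrow> (\<exists>m::int. r = of_int m \<and> k + 2 \<le> m)))
       else (\<forall>t. Im t \<le> 0 \<longrightarrow> f t = 0))"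
    if ae1: "asymp_exp h k b at_top" and ae2: "asymp_exp h k b at_bot" for k b
  proof (cases "lam = 1 \<and> r \<in> \<int>")
    case True
    then have "norm lam = 1" by simp
    from UF[of at_top, OF disjI1[OF refl] this ae1] show ?thesis
    proof (elim disjE exE conjE)
      assume "\<forall>t. g t = 0"
      then have "\<forall>z. Im z \<le> 0 \<longrightarrow> f z = 0" using lift by blast
      then show ?thesis unfolding if_P[OF True] by (intro exI[of _ 0]) simp
    next
      fix c m assume "\<forall>t. g t = c" "r = of_int m" "k + 2 \<le> m"
      then have "\<forall>z. Im z \<le> 0 \<longrightarrow> f z = c" "\<exists>m::int. r = of_int m \<and> k + 2 \<le> m" using lift by blast+
      then show ?thesis unfolding if_P[OF True] by blast
    qed
  next
    case False
    have "\<forall>t. g t = 0"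
    proof (cases "norm lam = 1")
      case True
      from UF[of at_top, OF disjI1[OF refl] True ae1] show ?thesis
      proof (elim disjE exE conjE)
        fix c m assume "lam = 1" "r = of_int m"
        then have "lam = 1 \<and> r \<in> \<int>" by simp
        then show ?thesis using False by blast
      qed
    next
      case nl: False
      show ?thesis
      proof (cases "norm lam > 1")
        case True then show ?thesis using Ztb ae1 by blast
      next
        case False then show ?thesis using Zbs ae2 nl by simp
      qed
    qed
    then have "\<forall>z. Im z \<le> 0 \<longrightarrow> f z = 0" using lift by blast
    then show ?thesis unfolding if_not_P[OF False] .
  qed
  show ?thesis
  proof (intro conjI allI impI)
    fix k b
    assume "asymp_exp (\<lambda>t. Pop r f (complex_of_real t)) k b at_top \<and>
            asymp_exp (\<lambda>t. Pop r f (complex_of_real t)) k b at_bot"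
    then show "(if lam = 1 \<and> r \<in> \<int> then
         (\<exists>c. (\<forall>t. Im t \<le> 0 \<longrightarrow> f t = c) \<and>
              (c \<noteq> 0 \<longrightarrow> (\<exists>m::int. r = of_int m \<and> k + 2 \<le> m)))
       else (\<forall>t. Im t \<le> 0 \<longrightarrow> f t = 0))"
      using parti unfolding h_def by blast
  next
    fix eps :: int and k b
    assume a: "eps \<in> {1, -1} \<and>
        asymp_exp (\<lambda>t. Pop r f (complex_of_real t)) k b (filtermap (\<lambda>s. real_of_int eps * s) at_top)"
    then have F: "filtermap (\<lambda>s. real_of_int eps * s) at_top = at_top \<or> filtermap (\<lambda>s. real_of_int eps * s) at_top = (at_bot :: real filter)"
      by (intro filt_eps) blast
    have ae: "asymp_exp h k b (filtermap (\<lambda>s. real_of_int eps * s) at_top)" using a unfolding h_def by blast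
    from partii[OF F ae] show "(if lam = 1 \<and> (\<exists>m::int. r = of_int m \<and> k + 2 \<le> m) then
         (\<exists>c. \<forall>t. Im t \<le> 0 \<longrightarrow> f t = c)
       else if norm lam = 1 then (\<forall>t. Im t \<le> 0 \<longrightarrow> f t = 0)
       else asymp_zero (\<lambda>t. f (complex_of_real t)) (filtermap (\<lambda>s. real_of_int eps * s) at_top))"
      unfolding g_def .
  qed
qed

end
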